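(* Let $1\le k\le n$, let $A\in\mathbb{R}^{n\times n}$, and consider $f(Q)=\langle A,Q\rangle=\operatorname{tr}(A^{\mathsf T}Q)$ on $\mathrm{Gr}(k,n)=\{Q\in\mathrm{O}(n): Q^{\mathsf T}=Q,\ \operatorname{tr}(Q)=2k-n\}$, equipped with the Riemannian metric $\langle X,Y\rangle_Q=\operatorname{tr}(XY)$ on tangent spaces. Then the Riemannian gradient of $f$ is \[ \nabla f(Q)=\tfrac14\big(A+A^{\mathsf T}-QAQ-QA^{\mathsf T}Q\big). \] Let $(A+A^{\mathsf T})/2=U\Lambda U^{\mathsf T}$ be an eigendecomposition with $U\in\mathrm{O}(n)$, $\Lambda=\operatorname{diag}(\lambda_1,\dots,\lambda_n)$, $\lambda_1\ge\cdots\ge\lambda_n$. Then $Q^*=UI_{k,n-k}U^{\mathsf T}$ is a maximizer of $f$ over $\mathrm{Gr}(k,n)$, and for every $Q\in\mathrm{Gr}(k,n)$, \[ 2\|\Lambda\|\,(f(Q^* )-f(Q))\ \ge\ \|\nabla f(Q)\|^2 . \]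
   Context: $I_{k,n-k}=\operatorname{diag}(I_k,-I_{n-k})$. The tangent space of $\mathrm{Gr}(k,n)$ at $Q$ is $\{X\in\mathbb{R}^{n\times n}:X^{\mathsf T}=X,\ XQ+QX=0\}$. $\|\nabla f(Q)\|$ is the Frobenius norm and $\|\Lambda\|$ is the spectral (operator) norm of $\Lambda$. *)

theory Defs
  imports "HOL-Analysis.Analysis" "Jordan_Normal_Form.Matrix"
begin

definition mtrace :: "real mat \<Rightarrow> real" where
  "mtrace M = (\<Sum>i<dim_row M. M $$ (i,i))"

definition frob_norm :: "real mat \<Rightarrow> real" where
  "frob_norm M = sqrt (\<Sum>i<dim_row M. \<Sum>j<dim_col M. (M $$ (i,j))\<^sup>2)"

definition vnorm :: "real vec \<Rightarrow> real" where
  "vnorm v = sqrt (\<Sum>i<dim_vec v. (v $ i)\<^sup>2)"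

definition op_norm :: "real mat \<Rightarrow> real" where
  "op_norm M = Sup {vnorm (M *\<^sub>v v) | v. v \<in> carrier_vec (dim_col M) \<and> vnorm v \<le> 1}"

definition orth_group :: "nat \<Rightarrow> real mat set" where
  "orth_group n = {Q \<in> carrier_mat n n. transpose_mat Q * Q = 1\<^sub>m n}"

definition grassmann :: "nat \<Rightarrow> nat \<Rightarrow> real mat set" where
  "grassmann k n = {Q \<in> orth_group n. transpose_mat Q = Q \<and> mtrace Q = 2 * real k - real n}"

definition tangent_space :: "nat \<Rightarrow> real mat \<Rightarrow> real mat set" where
  "tangent_space n Q = {X \<in> carrier_mat n n. transpose_mat X = X \<and> X * Q + Q * X = 0\<^sub>m n n}"

definition Ikn :: "nat \<Rightarrow> nat \<Rightarrow> real mat" where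
  "Ikn k n = mat_diag n (\<lambda>i. if i < k then 1 else -1)"

definition riem_grad :: "nat \<Rightarrow> (real mat \<Rightarrow> real) \<Rightarrow> real mat \<Rightarrow> real mat" where
  "riem_grad n f Q = (THE G. G \<in> tangent_space n Q \<and>
     (\<forall>X \<in> tangent_space n Q.
        ((\<lambda>t. f (Q + t \<cdot>\<^sub>m X)) has_real_derivative mtrace (G * X)) (at 0)))"

end

theory Submission
  imports Defs "Jordan_Normal_Form.Determinant"
begin

lemma mtrace_comm:
  assumes "A \<in> carrier_mat n m" "B \<in> carrier_mat m n"
  shows "mtrace (A * B) = mtrace (B * A)"
proof -
  have "mtrace (A * B) = (\<Sum>i<n. \<Sum>j<m. A $$ (i, j) * B $$ (j, i))"
    using assms unfolding mtrace_def by (simp add: scalar_prod_def atLeast0LessThan)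
  also have "\<dots> = (\<Sum>j<m. \<Sum>i<n. B $$ (j, i) * A $$ (i, j))"
    by (subst sum.swap) (simp add: mult.commute)
  also have "\<dots> = mtrace (B * A)"
    using assms unfolding mtrace_def by (simp add: scalar_prod_def atLeast0LessThan)
  finally show ?thesis .
qed

lemma mtrace_transpose: "M \<in> carrier_mat n n \<Longrightarrow> mtrace (transpose_mat M) = mtrace M"
  unfolding mtrace_def by simp

lemma mtrace_add: "A \<in> carrier_mat n n \<Longrightarrow> B \<in> carrier_mat n n \<Longrightarrow> mtrace (A + B) = mtrace A + mtrace B"
  unfolding mtrace_def by (simp add: sum.distrib)

lemma mtrace_minus: "A \<in> carrier_mat n n \<Longrightarrow> B \<in> carrier_mat n n \<Longrightarrow> mtrace (A - B) = mtrace A - mtrace B"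
  unfolding mtrace_def by (simp add: sum_subtractf)

lemma mtrace_smult: "A \<in> carrier_mat n n \<Longrightarrow> mtrace (c \<cdot>\<^sub>m A) = c * mtrace A"
  unfolding mtrace_def by (simp add: sum_distrib_left)

lemma mtrace_uminus: "A \<in> carrier_mat n n \<Longrightarrow> mtrace (- A) = - mtrace A"
  unfolding mtrace_def by (simp add: sum_negf)

lemma sym_entry: "A \<in> carrier_mat n n \<Longrightarrow> transpose_mat A = A \<Longrightarrow> i < n \<Longrightarrow> j < n \<Longrightarrow> A $$ (j, i) = A $$ (i, j)"
  by (metis carrier_matD(1) carrier_matD(2) index_transpose_mat(1))

lemma mtrace_sym_sq:
  assumes "A \<in> carrier_mat n n" "transpose_mat A = A"
  shows "mtrace (A * A) = (\<Sum>i<n. \<Sum>j<n. (A $$ (i, j))\<^sup>2)"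
proof -
  have "mtrace (A * A) = (\<Sum>i<n. \<Sum>j<n. A $$ (i, j) * A $$ (j, i))"
    using assms unfolding mtrace_def by (simp add: scalar_prod_def atLeast0LessThan)
  also have "\<dots> = (\<Sum>i<n. \<Sum>j<n. (A $$ (i, j))\<^sup>2)"
    by (intro sum.cong refl) (simp add: sym_entry[OF assms] power2_eq_square)
  finally show ?thesis .
qed

lemma frob_sq: "A \<in> carrier_mat n n \<Longrightarrow> (frob_norm A)\<^sup>2 = (\<Sum>i<n. \<Sum>j<n. (A $$ (i, j))\<^sup>2)"
  unfolding frob_norm_def by (simp add: sum_nonneg)

lemma sym_zero:
  assumes "A \<in> carrier_mat n n" "transpose_mat A = A" "mtrace (A * A) = 0"
  shows "A = 0\<^sub>m n n"
proof (rule eq_matI)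
  have s: "(\<Sum>i<n. \<Sum>j<n. (A $$ (i, j))\<^sup>2) = 0" using mtrace_sym_sq[OF assms(1,2)] assms(3) by simp
  fix i j assume "i < dim_row (0\<^sub>m n n :: real mat)" "j < dim_col (0\<^sub>m n n :: real mat)"
  hence ij: "i < n" "j < n" by auto
  have "(\<Sum>j<n. (A $$ (i, j))\<^sup>2) = 0"
    using s ij by (subst (asm) sum_nonneg_eq_0_iff) (auto intro: sum_nonneg)
  hence "(A $$ (i, j))\<^sup>2 = 0"
    using ij by (subst (asm) sum_nonneg_eq_0_iff) auto
  thus "A $$ (i, j) = 0\<^sub>m n n $$ (i, j)" using ij by simp
qed (use assms in auto)

lemma transpose_smult': "transpose_mat (c \<cdot>\<^sub>m A) = c \<cdot>\<^sub>m transpose_mat (A :: real mat)"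
  by (rule eq_matI) auto

lemma cancel_left:
  assumes "U \<in> carrier_mat n n" "V \<in> carrier_mat n n" "V * U = 1\<^sub>m n" "X \<in> carrier_mat n m"
  shows "V * (U * X) = (X :: real mat)"
proof -
  have "V * (U * X) = (V * U) * X" by (rule assoc_mult_mat[symmetric]) (use assms in auto)
  also have "\<dots> = X" using assms by (simp del: assoc_mult_mat)
  finally show ?thesis .
qed

lemma assoc_n: "A \<in> carrier_mat n n \<Longrightarrow> B \<in> carrier_mat n n \<Longrightarrow> C \<in> carrier_mat n n \<Longrightarrow> A * B * C = A * (B * (C :: real mat))"
  by (rule assoc_mult_mat)

lemma W_props:
  fixes S Q :: "real mat"
  assumes Sc: "S \<in> carrier_mat n n" and ST: "transpose_mat S = S"
    and Qc: "Q \<in> carrier_mat n n" and QT: "transpose_mat Q = Q" and QQ: "Q * Q = 1\<^sub>m n"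
  shows "S - Q * S * Q \<in> carrier_mat n n"
    "transpose_mat (S - Q * S * Q) = S - Q * S * Q"
    "(S - Q * S * Q) * Q + Q * (S - Q * S * Q) = 0\<^sub>m n n"
    "\<And>X. X \<in> carrier_mat n n \<Longrightarrow> X * Q + Q * X = 0\<^sub>m n n \<Longrightarrow>
        mtrace ((S - Q * S * Q) * X) = 2 * mtrace (S * X)"
    "mtrace ((S - Q * S * Q) * (S - Q * S * Q)) = 2 * mtrace (S * S) - 2 * mtrace (S * Q * S * Q)"
proof -
  have QQX: "\<And>X. X \<in> carrier_mat n n \<Longrightarrow> Q * (Q * X) = X"
    using cancel_left[OF Qc Qc QQ] by blast
  have QSQc: "Q * S * Q \<in> carrier_mat n n" using Sc Qc by (simp add: assoc_n[of _ n])
  show Wc: "S - Q * S * Q \<in> carrier_mat n n" using Sc Qc by (simp add: minus_carrier_mat)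
  have "transpose_mat (Q * S * Q) = Q * S * Q"
  proof -
    have "transpose_mat (Q * S * Q) = transpose_mat Q * transpose_mat (Q * S)"
      by (rule transpose_mult) (use Sc Qc in auto)
    also have "\<dots> = Q * (S * Q)" using transpose_mult[OF Qc Sc] QT ST by simp
    finally show ?thesis using Sc Qc by (simp add: assoc_n[of _ n])
  qed
  thus "transpose_mat (S - Q * S * Q) = S - Q * S * Q"
    using transpose_minus[OF Sc QSQc] ST by simp
  have e1: "(S - Q * S * Q) * Q = S * Q - Q * S"
  proof -
    have "(S - Q * S * Q) * Q = S * Q - Q * S * Q * Q"
      by (rule minus_mult_distrib_mat) (use Sc Qc in auto)
    also have "Q * S * Q * Q = Q * S" using Sc Qc QQ by (simp add: assoc_n[of _ n])
    finally show ?thesis .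
  qed
  have e2: "Q * (S - Q * S * Q) = Q * S - S * Q"
  proof -
    have "Q * (S - Q * S * Q) = Q * S - Q * (Q * S * Q)"
      by (rule mult_minus_distrib_mat) (use Sc Qc in auto)
    also have "Q * (Q * S * Q) = S * Q" using Sc Qc QQX by (simp add: assoc_n[of _ n])
    finally show ?thesis .
  qed
  show "(S - Q * S * Q) * Q + Q * (S - Q * S * Q) = 0\<^sub>m n n"
    unfolding e1 e2 by (rule eq_matI) (use Sc Qc in auto)
  show "mtrace ((S - Q * S * Q) * X) = 2 * mtrace (S * X)"
    if Xc: "X \<in> carrier_mat n n" and XQ: "X * Q + Q * X = 0\<^sub>m n n" for X
  proof -
    have QX: "Q * X = - (X * Q)"
    proof (rule eq_matI)
      fix i j assume "i < dim_row (- (X * Q))" "j < dim_col (- (X * Q))"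
      hence ij: "i < n" "j < n" using Xc Qc by auto
      have "(X * Q + Q * X) $$ (i, j) = 0" using XQ ij by simp
      hence "(X * Q) $$ (i, j) + (Q * X) $$ (i, j) = 0" using ij Xc Qc by simp
      thus "(Q * X) $$ (i, j) = (- (X * Q)) $$ (i, j)" using ij Xc Qc by simp
    qed (use Xc Qc in auto)
    have QXQ: "Q * X * Q = - X"
    proof -
      have "Q * X * Q = - (X * Q) * Q" by (simp add: QX)
      also have "\<dots> = - (X * Q * Q)" by (rule uminus_mult_left_mat) (use Xc Qc in auto)
      also have "X * Q * Q = X" using Xc Qc QQ by simp
      finally show ?thesis .
    qed
    have "(S - Q * S * Q) * X = S * X - Q * S * Q * X"
      by (rule minus_mult_distrib_mat) (use Sc Qc Xc in auto)
    hence "mtrace ((S - Q * S * Q) * X) = mtrace (S * X - Q * S * Q * X)" by (simp only:)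
    also have "\<dots> = mtrace (S * X) - mtrace (Q * S * Q * X)"
      by (rule mtrace_minus) (use Sc Qc Xc in auto)
    also have "mtrace (Q * S * Q * X) = mtrace (Q * (S * Q * X))" using Sc Qc Xc by (simp add: assoc_n[of _ n])
    also have "\<dots> = mtrace ((S * Q * X) * Q)" by (rule mtrace_comm) (use Sc Qc Xc in auto)
    also have "(S * Q * X) * Q = S * (Q * X * Q)" using Sc Qc Xc by (simp add: assoc_n[of _ n])
    also have "\<dots> = S * (- X)" by (simp add: QXQ)
    also have "\<dots> = - (S * X)" by (rule uminus_mult_right_mat) (use Sc Xc in auto)
    also have "mtrace (- (S * X)) = - mtrace (S * X)" by (rule mtrace_uminus) (use Sc Xc in auto)
    finally show ?thesis by simp
  qed
  show "mtrace ((S - Q * S * Q) * (S - Q * S * Q)) = 2 * mtrace (S * S) - 2 * mtrace (S * Q * S * Q)"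
  proof -
    let ?W = "S - Q * S * Q"
    have "?W * ?W = S * ?W - Q * S * Q * ?W"
      by (rule minus_mult_distrib_mat) (use Sc Qc in auto)
    also have "S * ?W = S * S - S * (Q * S * Q)"
      by (rule mult_minus_distrib_mat) (use Sc Qc in auto)
    also have "Q * S * Q * ?W = Q * S * Q * S - Q * S * Q * (Q * S * Q)"
      by (rule mult_minus_distrib_mat) (use Sc Qc in auto)
    finally have WW: "?W * ?W = (S * S - S * (Q * S * Q)) - (Q * S * Q * S - Q * S * Q * (Q * S * Q))" .
    have t1: "mtrace (S * (Q * S * Q)) = mtrace (S * Q * S * Q)" using Sc Qc by (simp add: assoc_n[of _ n])
    have t2: "mtrace (Q * S * Q * S) = mtrace (S * Q * S * Q)"
    proof -
      have "mtrace (Q * S * Q * S) = mtrace (Q * (S * Q * S))" using Sc Qc by (simp add: assoc_n[of _ n])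
      also have "\<dots> = mtrace ((S * Q * S) * Q)" by (rule mtrace_comm) (use Sc Qc in auto)
      finally show ?thesis .
    qed
    have t3: "mtrace (Q * S * Q * (Q * S * Q)) = mtrace (S * S)"
    proof -
      have "Q * S * Q * (Q * S * Q) = Q * (S * S * Q)" using Sc Qc QQX by (simp add: assoc_n[of _ n])
      hence "mtrace (Q * S * Q * (Q * S * Q)) = mtrace (Q * (S * S * Q))" by simp
      also have "\<dots> = mtrace ((S * S * Q) * Q)" by (rule mtrace_comm) (use Sc Qc in auto)
      also have "(S * S * Q) * Q = S * S" using Sc Qc QQ by (simp add: assoc_n[of _ n])
      finally show ?thesis .
    qed
    have c: "S * S \<in> carrier_mat n n" "S * (Q * S * Q) \<in> carrier_mat n n"
      "Q * S * Q * S \<in> carrier_mat n n" "Q * S * Q * (Q * S * Q) \<in> carrier_mat n n"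
      using Sc Qc by auto
    show ?thesis unfolding WW
      using mtrace_minus[OF minus_carrier_mat[OF c(2)] minus_carrier_mat[OF c(4)]]
        mtrace_minus[OF c(1,2)] mtrace_minus[OF c(3,4)] t1 t2 t3 by simp
  qed
qed

lemma conj_props:
  fixes U :: "real mat"
  assumes Uc: "U \<in> carrier_mat n n" and U1: "transpose_mat U * U = 1\<^sub>m n" and U2: "U * transpose_mat U = 1\<^sub>m n"
  shows "\<And>M N. M \<in> carrier_mat n n \<Longrightarrow> N \<in> carrier_mat n n \<Longrightarrow>
           (U * M * transpose_mat U) * (U * N * transpose_mat U) = U * (M * N) * transpose_mat U"
    "\<And>M. M \<in> carrier_mat n n \<Longrightarrow> mtrace (U * M * transpose_mat U) = mtrace M"
proof -
  have TUc: "transpose_mat U \<in> carrier_mat n n" using Uc by simp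
  have C: "\<And>X. X \<in> carrier_mat n n \<Longrightarrow> transpose_mat U * (U * X) = X"
    using cancel_left[OF Uc TUc U1] by blast
  show "(U * M * transpose_mat U) * (U * N * transpose_mat U) = U * (M * N) * transpose_mat U"
    if "M \<in> carrier_mat n n" "N \<in> carrier_mat n n" for M N
    using that Uc TUc C by (simp add: assoc_n[of _ n])
  show "mtrace (U * M * transpose_mat U) = mtrace M" if Mc: "M \<in> carrier_mat n n" for M
  proof -
    have "mtrace (U * M * transpose_mat U) = mtrace (transpose_mat U * (U * M))"
      by (rule mtrace_comm) (use Uc Mc in auto)
    also have "\<dots> = mtrace M" using C Mc Uc by simp
    finally show ?thesis .
  qed
qed

lemma core:
  fixes lam e :: "nat \<Rightarrow> real" and p :: "nat \<Rightarrow> nat \<Rightarrow> real" and L :: real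
  assumes k1: "1 \<le> k" and kn: "k \<le> n"
    and sorted: "\<forall>i j. i \<le> j \<longrightarrow> j < n \<longrightarrow> lam j \<le> lam i"
    and e_def: "\<And>i. e i = (if i < k then 1 else -1)"
    and sym: "\<And>i j. i < n \<Longrightarrow> j < n \<Longrightarrow> p j i = p i j"
    and row: "\<And>i. i < n \<Longrightarrow> (\<Sum>j<n. (p i j)\<^sup>2) = 1"
    and tr: "(\<Sum>i<n. p i i) = (\<Sum>i<n. e i)"
    and Lb: "\<And>i. i < n \<Longrightarrow> \<bar>lam i\<bar> \<le> L"
  shows "0 \<le> (\<Sum>i<n. lam i * (e i - p i i))"
    and "(1/2) * ((\<Sum>i<n. (lam i)\<^sup>2) - (\<Sum>i<n. \<Sum>j<n. lam i * p i j * lam j * p j i))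
           \<le> 2 * L * (\<Sum>i<n. lam i * (e i - p i i))"
proof -
  define c where "c = lam (k - 1)"
  define \<kappa> where "\<kappa> i = (lam i - c) * e i" for i
  have e2: "e i * e i = 1" for i by (simp add: e_def)
  have kpos: "0 \<le> \<kappa> i" if "i < n" for i
  proof (cases "i < k")
    case True
    hence "lam (k - 1) \<le> lam i" using sorted kn k1 by auto
    thus ?thesis using True by (simp add: \<kappa>_def e_def c_def)
  next
    case False
    hence "lam i \<le> lam (k - 1)" using sorted kn k1 that by auto
    thus ?thesis using False by (simp add: \<kappa>_def e_def c_def)
  qed
  have kabs: "\<kappa> i = \<bar>lam i - c\<bar>" if "i < n" for i
    using kpos[OF that] by (auto simp: \<kappa>_def e_def split: if_splits)
  have L0: "0 \<le> L" using Lb[of 0] kn k1 by auto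
  have pii: "(p i i)\<^sup>2 \<le> 1" if "i < n" for i
  proof -
    have "(p i i)\<^sup>2 \<le> (\<Sum>j<n. (p i j)\<^sup>2)"
      by (rule member_le_sum[where f = "\<lambda>j. (p i j)\<^sup>2"]) (use that in auto)
    thus ?thesis using row[OF that] by simp
  qed
  have ineq1: "1 - (p i i)\<^sup>2 \<le> 2 * (1 - e i * p i i)" for i
  proof -
    have "0 \<le> (e i - p i i)\<^sup>2" by simp
    hence "0 \<le> e i * e i - 2 * e i * p i i + (p i i)\<^sup>2" by (simp add: power2_eq_square algebra_simps)
    thus ?thesis using e2[of i] by simp
  qed
  have D: "(\<Sum>i<n. lam i * (e i - p i i)) = (\<Sum>i<n. \<kappa> i * (1 - e i * p i i))"
  proof -
    have "(\<Sum>i<n. lam i * (e i - p i i)) = (\<Sum>i<n. (lam i - c) * (e i - p i i)) + c * ((\<Sum>i<n. e i) - (\<Sum>i<n. p i i))"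
      by (simp add: algebra_simps sum.distrib sum_subtractf sum_distrib_left)
    also have "\<dots> = (\<Sum>i<n. (lam i - c) * (e i - p i i))" using tr by simp
    also have "\<dots> = (\<Sum>i<n. \<kappa> i * (1 - e i * p i i))"
    proof (rule sum.cong[OF refl])
      fix i
      have "(lam i - c) * (e i - p i i) = (lam i - c) * (e i - e i * e i * p i i)" using e2[of i] by simp
      thus "(lam i - c) * (e i - p i i) = \<kappa> i * (1 - e i * p i i)" by (simp add: \<kappa>_def algebra_simps)
    qed
    finally show ?thesis .
  qed
  have epi: "e i * p i i \<le> 1" if "i < n" for i
  proof -
    have "\<bar>p i i\<bar> \<le> 1" using pii[OF that] by (simp add: abs_square_le_1)
    thus ?thesis by (auto simp: e_def)
  qed
  show "0 \<le> (\<Sum>i<n. lam i * (e i - p i i))"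
    unfolding D by (intro sum_nonneg mult_nonneg_nonneg) (use kpos epi in auto)
  have pair: "(lam i - lam j)\<^sup>2 \<le> 2 * L * (\<kappa> i + \<kappa> j)" if "i < n" "j < n" for i j
  proof -
    have a: "\<bar>lam i - lam j\<bar> \<le> \<kappa> i + \<kappa> j" using kabs[OF that(1)] kabs[OF that(2)] by linarith
    have b: "\<bar>lam i - lam j\<bar> \<le> 2 * L" using Lb[OF that(1)] Lb[OF that(2)] by linarith
    have "(lam i - lam j)\<^sup>2 = \<bar>lam i - lam j\<bar> * \<bar>lam i - lam j\<bar>" by (simp add: power2_eq_square)
    also have "\<dots> \<le> (2 * L) * (\<kappa> i + \<kappa> j)"
      by (rule mult_mono[OF b a]) (use L0 in auto)
    finally show ?thesis by simp
  qed
  have sumL: "(\<Sum>i<n. (lam i)\<^sup>2) = (\<Sum>i<n. \<Sum>j<n. (lam i)\<^sup>2 * (p i j)\<^sup>2)"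
    by (intro sum.cong refl) (simp add: row flip: sum_distrib_left)
  have sumL2: "(\<Sum>i<n. \<Sum>j<n. (lam i)\<^sup>2 * (p i j)\<^sup>2) = (\<Sum>i<n. \<Sum>j<n. (lam j)\<^sup>2 * (p i j)\<^sup>2)"
    by (subst sum.swap) (intro sum.cong refl, simp add: sym)
  have sumM: "(\<Sum>i<n. \<Sum>j<n. lam i * p i j * lam j * p j i) = (\<Sum>i<n. \<Sum>j<n. lam i * lam j * (p i j)\<^sup>2)"
    by (intro sum.cong refl) (simp add: sym power2_eq_square)
  have X: "(\<Sum>i<n. (lam i)\<^sup>2) - (\<Sum>i<n. \<Sum>j<n. lam i * p i j * lam j * p j i)
      = (1/2) * (\<Sum>i<n. \<Sum>j<n. (lam i - lam j)\<^sup>2 * (p i j)\<^sup>2)"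
  proof -
    have "(\<Sum>i<n. \<Sum>j<n. (lam i - lam j)\<^sup>2 * (p i j)\<^sup>2)
       = (\<Sum>i<n. \<Sum>j<n. (lam i)\<^sup>2 * (p i j)\<^sup>2) + (\<Sum>i<n. \<Sum>j<n. (lam j)\<^sup>2 * (p i j)\<^sup>2)
         - 2 * (\<Sum>i<n. \<Sum>j<n. lam i * lam j * (p i j)\<^sup>2)"
      by (simp add: power2_diff algebra_simps sum.distrib sum_subtractf sum_distrib_left)
    thus ?thesis using sumL sumL2 sumM by simp
  qed
  have termb: "(lam i - lam j)\<^sup>2 * (p i j)\<^sup>2 \<le> 2 * L * (\<kappa> i + \<kappa> j) * (p i j)\<^sup>2
        - (if j = i then 4 * L * \<kappa> i * (p i i)\<^sup>2 else 0)" if "i < n" "j < n" for i j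
  proof (cases "j = i")
    case True thus ?thesis by simp
  next
    case False thus ?thesis using pair[OF that] by (simp add: mult_right_mono)
  qed
  have B1: "(\<Sum>i<n. \<Sum>j<n. (lam i - lam j)\<^sup>2 * (p i j)\<^sup>2)
      \<le> (\<Sum>i<n. \<Sum>j<n. 2 * L * (\<kappa> i + \<kappa> j) * (p i j)\<^sup>2 - (if j = i then 4 * L * \<kappa> i * (p i i)\<^sup>2 else 0))"
    by (intro sum_mono) (use termb in auto)
  have s1: "(\<Sum>i<n. \<Sum>j<n. \<kappa> i * (p i j)\<^sup>2) = (\<Sum>i<n. \<kappa> i)"
    by (intro sum.cong refl) (simp add: row flip: sum_distrib_left)
  have s2: "(\<Sum>i<n. \<Sum>j<n. \<kappa> j * (p i j)\<^sup>2) = (\<Sum>i<n. \<kappa> i)"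
  proof -
    have "(\<Sum>i<n. \<Sum>j<n. \<kappa> j * (p i j)\<^sup>2) = (\<Sum>j<n. \<Sum>i<n. \<kappa> j * (p j i)\<^sup>2)"
      by (subst sum.swap) (intro sum.cong refl, simp add: sym)
    thus ?thesis using s1 by simp
  qed
  have s3: "(\<Sum>i<n. \<Sum>j<n. (if j = i then 4 * L * \<kappa> i * (p i i)\<^sup>2 else 0)) = (\<Sum>i<n. 4 * L * \<kappa> i * (p i i)\<^sup>2)"
    by (intro sum.cong refl) (simp add: sum.delta)
  have B2: "(\<Sum>i<n. \<Sum>j<n. 2 * L * (\<kappa> i + \<kappa> j) * (p i j)\<^sup>2 - (if j = i then 4 * L * \<kappa> i * (p i i)\<^sup>2 else 0))
     = (\<Sum>i<n. 4 * L * (\<kappa> i * (1 - (p i i)\<^sup>2)))"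
  proof -
    have "(\<Sum>i<n. \<Sum>j<n. 2 * L * (\<kappa> i + \<kappa> j) * (p i j)\<^sup>2 - (if j = i then 4 * L * \<kappa> i * (p i i)\<^sup>2 else 0))
      = 2 * L * (\<Sum>i<n. \<Sum>j<n. \<kappa> i * (p i j)\<^sup>2) + 2 * L * (\<Sum>i<n. \<Sum>j<n. \<kappa> j * (p i j)\<^sup>2)
        - (\<Sum>i<n. \<Sum>j<n. (if j = i then 4 * L * \<kappa> i * (p i i)\<^sup>2 else 0))"
      by (simp add: algebra_simps sum.distrib sum_subtractf sum_distrib_left)
    also have "\<dots> = (\<Sum>i<n. 4 * L * (\<kappa> i * (1 - (p i i)\<^sup>2)))"
      unfolding s1 s2 s3 by (simp add: algebra_simps sum.distrib sum_subtractf sum_distrib_left)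
    finally show ?thesis .
  qed
  have B3: "(\<Sum>i<n. 4 * L * (\<kappa> i * (1 - (p i i)\<^sup>2))) \<le> (\<Sum>i<n. 4 * L * (\<kappa> i * (2 * (1 - e i * p i i))))"
    by (intro sum_mono mult_left_mono) (use L0 kpos ineq1 in auto)
  have "(1/2) * ((\<Sum>i<n. (lam i)\<^sup>2) - (\<Sum>i<n. \<Sum>j<n. lam i * p i j * lam j * p j i))
     = (1/4) * (\<Sum>i<n. \<Sum>j<n. (lam i - lam j)\<^sup>2 * (p i j)\<^sup>2)" unfolding X by simp
  also have "\<dots> \<le> (1/4) * (\<Sum>i<n. 4 * L * (\<kappa> i * (2 * (1 - e i * p i i))))"
    using B1 B2 B3 by linarith
  also have "\<dots> = 2 * L * (\<Sum>i<n. \<kappa> i * (1 - e i * p i i))"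
    by (simp add: sum_distrib_left algebra_simps)
  finally show "(1/2) * ((\<Sum>i<n. (lam i)\<^sup>2) - (\<Sum>i<n. \<Sum>j<n. lam i * p i j * lam j * p j i))
           \<le> 2 * L * (\<Sum>i<n. lam i * (e i - p i i))" unfolding D .
qed

lemma opnorm_diag:
  assumes "i < n"
  shows "\<bar>lam i\<bar> \<le> op_norm (mat_diag n lam)"
proof -
  let ?M = "mat_diag n lam"
  have mv: "(?M *\<^sub>v v) $ j = lam j * v $ j" if "v \<in> carrier_vec n" "j < n" for v j
  proof -
    have "(?M *\<^sub>v v) $ j = (\<Sum>l<n. (if j = l then lam l else 0) * v $ l)"
      using that by (simp add: mat_diag_def scalar_prod_def row_def atLeast0LessThan)
    also have "\<dots> = (\<Sum>l<n. if j = l then lam l * v $ l else 0)"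
      by (rule sum.cong) auto
    also have "\<dots> = lam j * v $ j"
      using that by (simp add: sum.delta)
    finally show ?thesis .
  qed
  let ?V = "{vnorm (?M *\<^sub>v v) | v. v \<in> carrier_vec (dim_col ?M) \<and> vnorm v \<le> 1}"
  have bdd: "bdd_above ?V"
  proof (rule bdd_aboveI)
    fix x assume "x \<in> ?V"
    then obtain v where x: "x = vnorm (?M *\<^sub>v v)" and v0: "v \<in> carrier_vec (dim_col ?M)" and v1: "vnorm v \<le> 1"
      by blast
    have "dim_col ?M = n" using mat_diag_dim carrier_matD(2) by blast
    hence v: "v \<in> carrier_vec n" "vnorm v \<le> 1" using v0 v1 by auto
    have vs: "(\<Sum>j<n. (v $ j)\<^sup>2) \<le> 1" using v unfolding vnorm_def by (simp add: real_sqrt_le_1_iff)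
    have "(\<Sum>j<n. (lam j * v $ j)\<^sup>2) \<le> (\<Sum>j<n. (lam j)\<^sup>2)"
    proof (rule sum_mono)
      fix j assume j: "j \<in> {..<n}"
      have "(v $ j)\<^sup>2 \<le> (\<Sum>j<n. (v $ j)\<^sup>2)"
        by (rule member_le_sum[where f = "\<lambda>j. (v $ j)\<^sup>2"]) (use j in auto)
      hence "(v $ j)\<^sup>2 \<le> 1" using vs by linarith
      thus "(lam j * v $ j)\<^sup>2 \<le> (lam j)\<^sup>2"
        by (simp add: power_mult_distrib mult_left_le)
    qed
    moreover have "dim_row ?M = n" using mat_diag_dim carrier_matD(1) by blast
    hence "x = sqrt (\<Sum>j<n. ((?M *\<^sub>v v) $ j)\<^sup>2)" using x unfolding vnorm_def by simp
    moreover have "(\<Sum>j<n. ((?M *\<^sub>v v) $ j)\<^sup>2) = (\<Sum>j<n. (lam j * v $ j)\<^sup>2)"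
      by (rule sum.cong) (use mv v in auto)
    ultimately show "x \<le> sqrt (\<Sum>j<n. (lam j)\<^sup>2)" by simp
  qed
  let ?u = "unit_vec n i :: real vec"
  have uc: "?u \<in> carrier_vec n" by simp
  have un: "vnorm ?u = 1"
  proof -
    have "(\<Sum>j<n. (?u $ j)\<^sup>2) = (\<Sum>j<n. if j = i then 1 else 0)" by (rule sum.cong) (auto simp: unit_vec_def)
    thus ?thesis unfolding vnorm_def using assms by simp
  qed
  have dM: "dim_row ?M = n" using mat_diag_dim carrier_matD(1) by blast
  have "vnorm (?M *\<^sub>v ?u) = sqrt (\<Sum>j<n. ((?M *\<^sub>v ?u) $ j)\<^sup>2)"
    unfolding vnorm_def using dM by simp
  also have "(\<Sum>j<n. ((?M *\<^sub>v ?u) $ j)\<^sup>2) = (\<Sum>j<n. if j = i then (lam i)\<^sup>2 else 0)"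
    by (rule sum.cong) (use mv[OF uc] in \<open>auto simp: unit_vec_def\<close>)
  also have "sqrt \<dots> = sqrt ((lam i)\<^sup>2)"
    using assms by simp
  also have "\<dots> = \<bar>lam i\<bar>" by simp
  finally have "\<bar>lam i\<bar> \<in> ?V" using uc un by (metis (mono_tags, lifting) mat_diag_dim carrier_matD(2) mem_Collect_eq order_refl)
  thus ?thesis unfolding op_norm_def by (rule cSup_upper[OF _ bdd])
qed


theorem lemma6p1:
  fixes k n :: nat and A :: "real mat" and f :: "real mat \<Rightarrow> real"
  assumes "1 \<le> k" and "k \<le> n" and "A \<in> carrier_mat n n"
    and "f = (\<lambda>Q. mtrace (transpose_mat A * Q))"
  shows "(\<forall>Q \<in> grassmann k n.
            riem_grad n f Q = (1/4) \<cdot>\<^sub>m (A + transpose_mat A - Q * A * Q - Q * transpose_mat A * Q))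
       \<and> (\<forall>U lam. U \<in> orth_group n \<longrightarrow>
            (\<forall>i j. i \<le> j \<longrightarrow> j < n \<longrightarrow> lam j \<le> lam i) \<longrightarrow>
            (1/2) \<cdot>\<^sub>m (A + transpose_mat A) = U * mat_diag n lam * transpose_mat U \<longrightarrow>
            (let Qs = U * Ikn k n * transpose_mat U in
               Qs \<in> grassmann k n \<and> (\<forall>Q \<in> grassmann k n. f Q \<le> f Qs) \<and>
               (\<forall>Q \<in> grassmann k n.
                  2 * op_norm (mat_diag n lam) * (f Qs - f Q) \<ge> (frob_norm (riem_grad n f Q))\<^sup>2)))"
proof -
  note k1 = assms(1) and kn = assms(2)
  have Ac: "A \<in> carrier_mat n n" using assms(3) .
  have TAc: "transpose_mat A \<in> carrier_mat n n" using Ac by simp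
  define S where "S = (1/2) \<cdot>\<^sub>m (A + transpose_mat A)"
  have Sc: "S \<in> carrier_mat n n" using Ac by (simp add: S_def)
  have ST: "transpose_mat S = S" unfolding S_def by (rule eq_matI) (use Ac in auto)
  have trA: "mtrace (transpose_mat A * X) = mtrace (S * X)"
    if Xc: "X \<in> carrier_mat n n" and XT: "transpose_mat X = X" for X
  proof -
    have "mtrace (transpose_mat A * X) = mtrace (transpose_mat (transpose_mat A * X))"
      by (rule mtrace_transpose[symmetric]) (use Ac Xc in auto)
    also have "transpose_mat (transpose_mat A * X) = transpose_mat X * A"
      using transpose_mult[OF TAc Xc] by simp
    also have "mtrace (transpose_mat X * A) = mtrace (A * X)" using XT mtrace_comm[OF Xc Ac] by simp
    finally have 1: "mtrace (transpose_mat A * X) = mtrace (A * X)" .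
    have "S * X = (1/2) \<cdot>\<^sub>m ((A + transpose_mat A) * X)" unfolding S_def
      by (rule mult_smult_assoc_mat) (use Ac Xc in auto)
    also have "(A + transpose_mat A) * X = A * X + transpose_mat A * X"
      by (rule add_mult_distrib_mat) (use Ac Xc in auto)
    finally have "mtrace (S * X) = (1/2) * (mtrace (A * X) + mtrace (transpose_mat A * X))"
      using Ac Xc by (simp add: mtrace_smult[of _ n] mtrace_add[of _ n])
    thus ?thesis using 1 by simp
  qed
  have Qinfo: "Q \<in> carrier_mat n n \<and> transpose_mat Q = Q \<and> Q * Q = 1\<^sub>m n \<and> mtrace Q = 2 * real k - real n"
    if "Q \<in> grassmann k n" for Q
    using that unfolding grassmann_def orth_group_def by auto
  have rg: "riem_grad n f Q = (1/2) \<cdot>\<^sub>m (S - Q * S * Q) \<and>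
       (1/2) \<cdot>\<^sub>m (S - Q * S * Q) = (1/4) \<cdot>\<^sub>m (A + transpose_mat A - Q * A * Q - Q * transpose_mat A * Q)"
    if QG: "Q \<in> grassmann k n" for Q
  proof -
    have Qc: "Q \<in> carrier_mat n n" and QT: "transpose_mat Q = Q" and QQ: "Q * Q = 1\<^sub>m n"
      using Qinfo[OF QG] by auto
    define W where "W = S - Q * S * Q"
    note W = W_props[OF Sc ST Qc QT QQ, folded W_def]
    define G0 where "G0 = (1/2) \<cdot>\<^sub>m W"
    have G0c: "G0 \<in> carrier_mat n n" using W(1) by (simp add: G0_def)
    have QSQ: "Q * S * Q = (1/2) \<cdot>\<^sub>m (Q * A * Q + Q * transpose_mat A * Q)"
    proof -
      have "Q * S = (1/2) \<cdot>\<^sub>m (Q * (A + transpose_mat A))" unfolding S_def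
        by (rule mult_smult_distrib) (use Ac Qc in auto)
      also have "Q * (A + transpose_mat A) = Q * A + Q * transpose_mat A"
        by (rule mult_add_distrib_mat) (use Ac Qc in auto)
      finally have "Q * S * Q = (1/2) \<cdot>\<^sub>m (Q * A + Q * transpose_mat A) * Q" by simp
      also have "\<dots> = (1/2) \<cdot>\<^sub>m ((Q * A + Q * transpose_mat A) * Q)"
        by (rule mult_smult_assoc_mat) (use Ac Qc in auto)
      also have "(Q * A + Q * transpose_mat A) * Q = Q * A * Q + Q * transpose_mat A * Q"
        by (rule add_mult_distrib_mat) (use Ac Qc in auto)
      finally show ?thesis .
    qed
    have G0eq: "G0 = (1/4) \<cdot>\<^sub>m (A + transpose_mat A - Q * A * Q - Q * transpose_mat A * Q)"
    proof -
      have "G0 = (1/2) \<cdot>\<^sub>m (S - (1/2) \<cdot>\<^sub>m (Q * A * Q + Q * transpose_mat A * Q))"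
        unfolding G0_def W_def by (simp only: QSQ)
      also have "\<dots> = (1/4) \<cdot>\<^sub>m (A + transpose_mat A - Q * A * Q - Q * transpose_mat A * Q)"
        unfolding S_def by (rule eq_matI) (use Ac Qc in \<open>auto simp: algebra_simps\<close>)
      finally show ?thesis .
    qed
    have G0T: "transpose_mat G0 = G0" unfolding G0_def using W(2) by (simp add: transpose_smult')
    have e1: "G0 * Q = (1/2) \<cdot>\<^sub>m (W * Q)" unfolding G0_def
      by (rule mult_smult_assoc_mat) (use W(1) Qc in auto)
    have e2: "Q * G0 = (1/2) \<cdot>\<^sub>m (Q * W)" unfolding G0_def
      by (rule mult_smult_distrib) (use W(1) Qc in auto)
    have G0anti: "G0 * Q + Q * G0 = 0\<^sub>m n n"
    proof (rule eq_matI)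
      fix i j assume "i < dim_row (0\<^sub>m n n :: real mat)" "j < dim_col (0\<^sub>m n n :: real mat)"
      hence ij: "i < n" "j < n" by auto
      have "(W * Q + Q * W) $$ (i, j) = 0" using W(3) ij by simp
      hence a: "(W * Q) $$ (i, j) + (Q * W) $$ (i, j) = 0" using ij W(1) Qc by simp
      have "(G0 * Q + Q * G0) $$ (i, j) = (1/2) * ((W * Q) $$ (i, j) + (Q * W) $$ (i, j))"
        unfolding e1 e2 using ij W(1) Qc by (simp add: algebra_simps)
      thus "(G0 * Q + Q * G0) $$ (i, j) = 0\<^sub>m n n $$ (i, j)" using a ij by simp
    qed (use G0c Qc in auto)
    have tang: "G0 \<in> tangent_space n Q" unfolding tangent_space_def using G0c G0T G0anti by auto
    have deriv: "((\<lambda>t. f (Q + t \<cdot>\<^sub>m X)) has_real_derivative mtrace (G0 * X)) (at 0)"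
      if X: "X \<in> tangent_space n Q" for X
    proof -
      have Xc: "X \<in> carrier_mat n n" and XT: "transpose_mat X = X" and XQ: "X * Q + Q * X = 0\<^sub>m n n"
        using X unfolding tangent_space_def by auto
      have fe: "f (Q + t \<cdot>\<^sub>m X) = mtrace (transpose_mat A * Q) + t * mtrace (transpose_mat A * X)" for t
      proof -
        have "transpose_mat A * (Q + t \<cdot>\<^sub>m X) = transpose_mat A * Q + transpose_mat A * (t \<cdot>\<^sub>m X)"
          by (rule mult_add_distrib_mat) (use Ac Qc Xc in auto)
        also have "transpose_mat A * (t \<cdot>\<^sub>m X) = t \<cdot>\<^sub>m (transpose_mat A * X)"
          by (rule mult_smult_distrib) (use Ac Xc in auto)
        finally show ?thesis using assms(4) Ac Qc Xc by (simp add: mtrace_add[of _ n] mtrace_smult[of _ n])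
      qed
      have g: "mtrace (G0 * X) = mtrace (transpose_mat A * X)"
      proof -
        have "G0 * X = (1/2) \<cdot>\<^sub>m (W * X)" unfolding G0_def
          by (rule mult_smult_assoc_mat) (use W(1) Xc in auto)
        hence "mtrace (G0 * X) = (1/2) * mtrace (W * X)" using W(1) Xc by (simp add: mtrace_smult[of _ n])
        also have "\<dots> = mtrace (S * X)" using W(4)[OF Xc XQ] by simp
        also have "\<dots> = mtrace (transpose_mat A * X)" using trA[OF Xc XT] by simp
        finally show ?thesis .
      qed
      have "((\<lambda>t. mtrace (transpose_mat A * Q) + t * mtrace (transpose_mat A * X))
               has_real_derivative mtrace (transpose_mat A * X)) (at 0)"
        by (auto intro!: derivative_eq_intros)
      thus ?thesis unfolding fe g .
    qed
    have "riem_grad n f Q = G0"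
      unfolding riem_grad_def
    proof (rule the_equality)
      show "G0 \<in> tangent_space n Q \<and> (\<forall>X\<in>tangent_space n Q.
              ((\<lambda>t. f (Q + t \<cdot>\<^sub>m X)) has_real_derivative mtrace (G0 * X)) (at 0))"
        using tang deriv by auto
      fix G assume HG: "G \<in> tangent_space n Q \<and> (\<forall>X\<in>tangent_space n Q.
              ((\<lambda>t. f (Q + t \<cdot>\<^sub>m X)) has_real_derivative mtrace (G * X)) (at 0))"
      have Gc: "G \<in> carrier_mat n n" and GT: "transpose_mat G = G" and GQ: "G * Q + Q * G = 0\<^sub>m n n"
        using HG unfolding tangent_space_def by auto
      have eqtr: "mtrace (G * X) = mtrace (G0 * X)" if "X \<in> tangent_space n Q" for X
        using DERIV_unique HG deriv[OF that] that by blast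
      define D where "D = G - G0"
      have Dc: "D \<in> carrier_mat n n" using Gc G0c by (simp add: D_def minus_carrier_mat)
      have DT: "transpose_mat D = D" unfolding D_def using transpose_minus[OF Gc G0c] GT G0T by simp
      have DQ: "D * Q + Q * D = 0\<^sub>m n n"
      proof (rule eq_matI)
        fix i j assume "i < dim_row (0\<^sub>m n n :: real mat)" "j < dim_col (0\<^sub>m n n :: real mat)"
        hence ij: "i < n" "j < n" by auto
        have a: "(G * Q) $$ (i, j) + (Q * G) $$ (i, j) = 0"
          using arg_cong[OF GQ, of "\<lambda>M. M $$ (i, j)"] ij Gc Qc by simp
        have b: "(G0 * Q) $$ (i, j) + (Q * G0) $$ (i, j) = 0"
          using arg_cong[OF G0anti, of "\<lambda>M. M $$ (i, j)"] ij G0c Qc by simp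
        have "D * Q = G * Q - G0 * Q" unfolding D_def
          by (rule minus_mult_distrib_mat) (use Gc G0c Qc in auto)
        moreover have "Q * D = Q * G - Q * G0" unfolding D_def
          by (rule mult_minus_distrib_mat) (use Gc G0c Qc in auto)
        ultimately show "(D * Q + Q * D) $$ (i, j) = 0\<^sub>m n n $$ (i, j)" using a b ij Gc G0c Qc by simp
      qed (use Dc Qc in auto)
      have Dtan: "D \<in> tangent_space n Q" unfolding tangent_space_def using Dc DT DQ by auto
      have "(G - G0) * D = G * D - G0 * D"
        by (rule minus_mult_distrib_mat) (use Gc G0c Dc in auto)
      hence DD: "D * D = G * D - G0 * D" by (simp only: D_def[symmetric])
      have "mtrace (D * D) = 0"
        using DD mtrace_minus[of "G * D" n "G0 * D"] Gc G0c Dc eqtr[OF Dtan] by simp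
      hence D0: "D = 0\<^sub>m n n" by (rule sym_zero[OF Dc DT])
      show "G = G0"
      proof (rule eq_matI)
        fix i j assume "i < dim_row G0" "j < dim_col G0"
        hence ij: "i < n" "j < n" using G0c by auto
        have "D $$ (i, j) = 0" using D0 ij by simp
        thus "G $$ (i, j) = G0 $$ (i, j)" using ij Gc G0c by (simp add: D_def)
      qed (use Gc G0c in auto)
    qed
    thus ?thesis using G0eq unfolding G0_def W_def by simp
  qed
  have part2: "let Qs = U * Ikn k n * transpose_mat U in
               Qs \<in> grassmann k n \<and> (\<forall>Q \<in> grassmann k n. f Q \<le> f Qs) \<and>
               (\<forall>Q \<in> grassmann k n.
                  2 * op_norm (mat_diag n lam) * (f Qs - f Q) \<ge> (frob_norm (riem_grad n f Q))\<^sup>2)"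
    if U: "U \<in> orth_group n" and sorted: "\<forall>i j. i \<le> j \<longrightarrow> j < n \<longrightarrow> lam j \<le> lam i"
      and hS: "(1/2) \<cdot>\<^sub>m (A + transpose_mat A) = U * mat_diag n lam * transpose_mat U" for U lam
  proof -
    have Uc: "U \<in> carrier_mat n n" and U1: "transpose_mat U * U = 1\<^sub>m n"
      using U unfolding orth_group_def by auto
    have TUc: "transpose_mat U \<in> carrier_mat n n" using Uc by simp
    have U2: "U * transpose_mat U = 1\<^sub>m n" using mat_mult_left_right_inverse[OF TUc Uc U1] .
    note cj = conj_props[OF Uc U1 U2]
    have CU1: "\<And>X. X \<in> carrier_mat n n \<Longrightarrow> transpose_mat U * (U * X) = X"
      using cancel_left[OF Uc TUc U1] by blast
    have CU2: "\<And>X. X \<in> carrier_mat n n \<Longrightarrow> U * (transpose_mat U * X) = X"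
      using cancel_left[OF TUc Uc U2] by blast
    define e where "e i = (if i < k then 1 else -1 :: real)" for i
    define E where "E = Ikn k n"
    have Eeq: "E = mat_diag n e" unfolding E_def Ikn_def e_def by simp
    define Lam where "Lam = mat_diag n lam"
    have SL: "S = U * Lam * transpose_mat U" using hS by (simp add: S_def Lam_def)
    define Qs where "Qs = U * E * transpose_mat U"
    have Ec: "E \<in> carrier_mat n n" by (simp add: Eeq)
    have Lc: "Lam \<in> carrier_mat n n" by (simp add: Lam_def)
    have ET: "transpose_mat E = E" unfolding Eeq mat_diag_def by (rule eq_matI) auto
    have EE: "E * E = 1\<^sub>m n"
    proof -
      have "(\<lambda>i. e i * e i) = (\<lambda>i. 1)" by (simp add: e_def fun_eq_iff)
      thus ?thesis unfolding Eeq mat_diag_diag by simp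
    qed
    have sumE: "(\<Sum>i<n. e i) = 2 * real k - real n"
    proof -
      have un: "{..<n} = {..<k} \<union> {k..<n}" using kn by auto
      have "(\<Sum>i<n. e i) = (\<Sum>i<k. e i) + (\<Sum>i\<in>{k..<n}. e i)"
        unfolding un by (rule sum.union_disjoint) auto
      also have "(\<Sum>i<k. e i) = real k" by (simp add: e_def)
      also have "(\<Sum>i\<in>{k..<n}. e i) = - real (n - k)" by (simp add: e_def)
      finally show ?thesis using kn by (simp add: of_nat_diff)
    qed
    have trE: "mtrace E = (\<Sum>i<n. e i)" unfolding Eeq mtrace_def mat_diag_def by simp
    have QsT: "transpose_mat Qs = Qs"
    proof -
      have "transpose_mat Qs = transpose_mat (transpose_mat U) * transpose_mat (U * E)"
        unfolding Qs_def by (rule transpose_mult) (use Uc Ec in auto)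
      also have "transpose_mat (U * E) = transpose_mat E * transpose_mat U"
        by (rule transpose_mult) (use Uc Ec in auto)
      finally show ?thesis unfolding Qs_def using ET Uc Ec by (simp add: assoc_n[of _ n])
    qed
    have Qsc: "Qs \<in> carrier_mat n n" unfolding Qs_def using Uc Ec by simp
    have QsQs: "Qs * Qs = 1\<^sub>m n" unfolding Qs_def cj(1)[OF Ec Ec] EE using Uc U2 by simp
    have trQs: "mtrace Qs = 2 * real k - real n" unfolding Qs_def cj(2)[OF Ec] trE sumE ..
    have QsG: "Qs \<in> grassmann k n"
      unfolding grassmann_def orth_group_def using Qsc QsT QsQs trQs by auto
    have fQs: "f Qs = (\<Sum>i<n. lam i * e i)"
    proof -
      have "f Qs = mtrace (S * Qs)" using assms(4) trA[OF Qsc QsT] by simp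
      also have "S * Qs = U * (Lam * E) * transpose_mat U" unfolding SL Qs_def by (rule cj(1)[OF Lc Ec])
      also have "mtrace \<dots> = mtrace (Lam * E)" using cj(2) Lc Ec by simp
      also have "\<dots> = (\<Sum>i<n. lam i * e i)" unfolding Lam_def Eeq mat_diag_diag by (simp add: mtrace_def mat_diag_def)
      finally show ?thesis .
    qed
    have LB: "\<And>i. i < n \<Longrightarrow> \<bar>lam i\<bar> \<le> op_norm Lam" unfolding Lam_def by (rule opnorm_diag)
    have main: "0 \<le> f Qs - f Q \<and> 2 * op_norm Lam * (f Qs - f Q) \<ge> (frob_norm (riem_grad n f Q))\<^sup>2"
      if QG: "Q \<in> grassmann k n" for Q
    proof -
      have Qc: "Q \<in> carrier_mat n n" and QT: "transpose_mat Q = Q" and QQ: "Q * Q = 1\<^sub>m n"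
        and trQ: "mtrace Q = 2 * real k - real n"
        using Qinfo[OF QG] by auto
      have CQ: "\<And>X. X \<in> carrier_mat n n \<Longrightarrow> Q * (Q * X) = X"
        using cancel_left[OF Qc Qc QQ] by blast
      define P where "P = transpose_mat U * Q * U"
      have Pc: "P \<in> carrier_mat n n" unfolding P_def using Uc Qc by simp
      have PT: "transpose_mat P = P"
      proof -
        have "transpose_mat P = transpose_mat U * transpose_mat (transpose_mat U * Q)"
          unfolding P_def by (rule transpose_mult) (use Uc Qc in auto)
        also have "transpose_mat (transpose_mat U * Q) = transpose_mat Q * U"
          using transpose_mult[OF TUc Qc] by simp
        finally show ?thesis unfolding P_def using QT Uc Qc by (simp add: assoc_n[of _ n])
      qed
      have QP: "Q = U * P * transpose_mat U"
        unfolding P_def using Uc Qc CU2 U2 by (simp add: assoc_n[of _ n] right_mult_one_mat)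
      have PP: "P * P = 1\<^sub>m n"
        unfolding P_def using Uc Qc CU2 CQ U1 by (simp add: assoc_n[of _ n])
      have trP: "mtrace P = mtrace Q"
      proof -
        have "mtrace P = mtrace (transpose_mat U * (Q * U))" unfolding P_def using Uc Qc by simp
        also have "\<dots> = mtrace ((Q * U) * transpose_mat U)" by (rule mtrace_comm) (use Uc Qc in auto)
        also have "\<dots> = mtrace Q" using Uc Qc U2 by (simp add: assoc_n[of _ n] right_mult_one_mat)
        finally show ?thesis .
      qed
      have symP: "\<And>i j. i < n \<Longrightarrow> j < n \<Longrightarrow> P $$ (j, i) = P $$ (i, j)"
        using sym_entry[OF Pc PT] by blast
      have rowP: "(\<Sum>j<n. (P $$ (i, j))\<^sup>2) = 1" if i: "i < n" for i
      proof -
        have "(P * P) $$ (i, i) = 1" using PP i by simp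
        moreover have "(P * P) $$ (i, i) = (\<Sum>j<n. P $$ (i, j) * P $$ (j, i))"
          using Pc i by (simp add: scalar_prod_def atLeast0LessThan)
        ultimately show ?thesis using symP i by (simp add: power2_eq_square)
      qed
      have trP': "(\<Sum>i<n. P $$ (i, i)) = (\<Sum>i<n. e i)"
        using trP trQ sumE Pc unfolding mtrace_def by simp
      have fQ: "f Q = (\<Sum>i<n. lam i * P $$ (i, i))"
      proof -
        have "f Q = mtrace (S * Q)" using assms(4) trA[OF Qc QT] by simp
        also have "S * Q = U * (Lam * P) * transpose_mat U"
          unfolding SL by (subst QP, rule cj(1)[OF Lc Pc])
        also have "mtrace \<dots> = mtrace (Lam * P)" using cj(2) Lc Pc by simp
        also have "\<dots> = (\<Sum>i<n. lam i * P $$ (i, i))"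
          unfolding Lam_def mat_diag_mult_left[OF Pc] mtrace_def by simp
        finally show ?thesis .
      qed
      note W = W_props[OF Sc ST Qc QT QQ]
      have rgQ: "riem_grad n f Q = (1/2) \<cdot>\<^sub>m (S - Q * S * Q)" using rg[OF QG] by blast
      have fr: "(frob_norm (riem_grad n f Q))\<^sup>2 = (1/4) * mtrace ((S - Q * S * Q) * (S - Q * S * Q))"
      proof -
        have "(frob_norm (riem_grad n f Q))\<^sup>2 = (\<Sum>i<n. \<Sum>j<n. (((1/2) \<cdot>\<^sub>m (S - Q * S * Q)) $$ (i, j))\<^sup>2)"
          unfolding rgQ using W(1) by (simp add: frob_sq[of _ n])
        also have "\<dots> = (\<Sum>i<n. \<Sum>j<n. (1/4) * ((S - Q * S * Q) $$ (i, j))\<^sup>2)"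
          by (intro sum.cong refl) (use carrier_matD[OF W(1)] in \<open>simp add: power_mult_distrib power2_eq_square\<close>)
        also have "\<dots> = (1/4) * (\<Sum>i<n. \<Sum>j<n. ((S - Q * S * Q) $$ (i, j))\<^sup>2)"
          by (simp add: sum_distrib_left)
        finally have "(frob_norm (riem_grad n f Q))\<^sup>2 = (1/4) * (\<Sum>i<n. \<Sum>j<n. ((S - Q * S * Q) $$ (i, j))\<^sup>2)" .
        thus ?thesis using mtrace_sym_sq[OF W(1) W(2)] by simp
      qed
      have SS: "mtrace (S * S) = (\<Sum>i<n. (lam i)\<^sup>2)"
      proof -
        have "S * S = U * (Lam * Lam) * transpose_mat U" unfolding SL by (rule cj(1)[OF Lc Lc])
        hence "mtrace (S * S) = mtrace (Lam * Lam)" using cj(2) Lc by simp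
        also have "\<dots> = (\<Sum>i<n. (lam i)\<^sup>2)"
          unfolding Lam_def mat_diag_diag by (simp add: mtrace_def mat_diag_def power2_eq_square)
        finally show ?thesis .
      qed
      have SQSQ: "mtrace (S * Q * S * Q) = (\<Sum>i<n. \<Sum>j<n. lam i * P $$ (i, j) * lam j * P $$ (j, i))"
      proof -
        have "S * Q = U * (Lam * P) * transpose_mat U"
          unfolding SL by (subst QP, rule cj(1)[OF Lc Pc])
        moreover have "S * Q * S * Q = (S * Q) * (S * Q)" using Sc Qc by (simp add: assoc_n[of _ n])
        ultimately have "S * Q * S * Q = (U * (Lam * P) * transpose_mat U) * (U * (Lam * P) * transpose_mat U)"
          by simp
        also have "\<dots> = U * ((Lam * P) * (Lam * P)) * transpose_mat U"
          by (rule cj(1)) (use Lc Pc in auto)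
        finally have eqq: "S * Q * S * Q = U * ((Lam * P) * (Lam * P)) * transpose_mat U" .
        have "mtrace (S * Q * S * Q) = mtrace ((Lam * P) * (Lam * P))"
          unfolding eqq by (rule cj(2)) (use Lc Pc in auto)
        also have "\<dots> = (\<Sum>i<n. \<Sum>j<n. lam i * P $$ (i, j) * (lam j * P $$ (j, i)))"
          unfolding Lam_def mat_diag_mult_left[OF Pc] mtrace_def
          by (simp add: scalar_prod_def atLeast0LessThan)
        finally show ?thesis by (simp add: mult.assoc)
      qed
      note C = core[OF k1 kn sorted e_def symP rowP trP' LB]
      have diff: "f Qs - f Q = (\<Sum>i<n. lam i * (e i - P $$ (i, i)))"
        unfolding fQs fQ by (simp add: sum_subtractf algebra_simps)
      have grad: "(frob_norm (riem_grad n f Q))\<^sup>2 =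
          (1/2) * ((\<Sum>i<n. (lam i)\<^sup>2) - (\<Sum>i<n. \<Sum>j<n. lam i * P $$ (i, j) * lam j * P $$ (j, i)))"
        unfolding fr W(5) SS SQSQ by simp
      show ?thesis using C diff grad by simp
    qed
    show ?thesis unfolding Let_def E_def[symmetric] Qs_def[symmetric] Lam_def[symmetric]
      using QsG main by auto
  qed
  show ?thesis
  proof (intro conjI ballI allI impI)
    fix Q assume "Q \<in> grassmann k n"
    thus "riem_grad n f Q = (1/4) \<cdot>\<^sub>m (A + transpose_mat A - Q * A * Q - Q * transpose_mat A * Q)"
      using rg by metis
  next
    fix U lam assume "U \<in> orth_group n" "\<forall>i j. i \<le> j \<longrightarrow> j < n \<longrightarrow> lam j \<le> lam i"
      "(1/2) \<cdot>\<^sub>m (A + transpose_mat A) = U * mat_diag n lam * transpose_mat U"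
    thus "let Qs = U * Ikn k n * transpose_mat U in
               Qs \<in> grassmann k n \<and> (\<forall>Q \<in> grassmann k n. f Q \<le> f Qs) \<and>
               (\<forall>Q \<in> grassmann k n.
                  2 * op_norm (mat_diag n lam) * (f Qs - f Q) \<ge> (frob_norm (riem_grad n f Q))\<^sup>2)"
      by (rule part2)
  qed
qed

end
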